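(* Let $F$ be a nontrivial finite group, $\tfrac12<p<1$, and let $R_n=((L_n(i))_i,S_n)$ be the stationary random walk on $F\wr\mathbb{Z}$ with parameter $p$. Let $\rho_0=0$ and $\rho_k=\inf\{n>\rho_{k-1}:S_n=0\}$, and for $k\ge1$ let $M_k^+=\max_{0\le j\le\rho_k}S_j$ and $M_k^-=\min_{0\le j\le\rho_k}S_j$. Then for every $k\ge1$, \[\Pr(R_{\rho_k}=\mathrm{id}\mid S_0,S_1,\dots,S_{\rho_k})=|F|^{-(M_k^+-M_k^-+1)}.\]
   Context: Elements of $F\wr\mathbb{Z}$ are pairs $((L(i))_{i\in\mathbb{Z}},x)$ with $L:\mathbb{Z}\to F$ finitely supported and $x\in\mathbb{Z}$; $\mathrm{id}$ has all lamps $\mathrm{id}_F$ and $x=0$. $(S_n)$ is the Markov chain on $\mathbb{Z}$ with $S_0=0$ and $\Pr(S_{n+1}=x+1\mid S_n=x)$ equal to $p,\tfrac12,1-p$ for $x<0,x=0,x>0$ respectively, and $\Pr(S_{n+1}=x-1\mid S_n=x)$ equal to $1-p,\tfrac12,p$ respectively. $(U_n,V_n)_{n\ge1}$ are i.i.d. pairs of independent uniform elements of $F$, independent of $(S_n)$; $L_0\equiv\mathrm{id}_F$, $L_{n+1}(i)=L_n(i)$ for $i\notin\{S_n,S_{n+1}\}$, $L_{n+1}(S_n)=U_{n+1}$, $L_{n+1}(S_{n+1})=V_{n+1}$. The times $\rho_k$ are a.s. finite. *)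

theory Defs
  imports "HOL-Probability.Probability" "HOL-Algebra.Group"
begin

definition trans_prob :: "real \<Rightarrow> int \<Rightarrow> int \<Rightarrow> real" where
  "trans_prob p x y =
     (if y = x + 1 then (if x < 0 then p else if x = 0 then 1/2 else 1 - p)
      else if y = x - 1 then (if x < 0 then 1 - p else if x = 0 then 1/2 else p)
      else 0)"

definition path_prob :: "real \<Rightarrow> (nat \<Rightarrow> int) \<Rightarrow> nat \<Rightarrow> real" where
  "path_prob p xs n =
     (if xs 0 = 0 then (\<Prod>j<n. trans_prob p (xs j) (xs (Suc j))) else 0)"

fun lamps :: "'f \<Rightarrow> (nat \<Rightarrow> int) \<Rightarrow> (nat \<Rightarrow> 'f) \<Rightarrow> (nat \<Rightarrow> 'f) \<Rightarrow> nat \<Rightarrow> int \<Rightarrow> 'f" where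
  "lamps e s u v 0 = (\<lambda>i. e)"
| "lamps e s u v (Suc n) =
     ((lamps e s u v n)(s n := u (Suc n)))(s (Suc n) := v (Suc n))"

fun rho :: "(nat \<Rightarrow> int) \<Rightarrow> nat \<Rightarrow> nat" where
  "rho s 0 = 0"
| "rho s (Suc k) = (LEAST n. n > rho s k \<and> s n = 0)"

end

theory Submission imports Defs begin

fun NNp :: "nat \<Rightarrow> (nat \<Rightarrow> int) set" where
  "NNp 0 = {(\<lambda>j. if j = 0 then 0 else undefined)}"
| "NNp (Suc N) = (\<lambda>(ys,d). ys(Suc N := ys N + d)) ` (NNp N \<times> {-1,1})"

lemma NNp_props:
  "ys \<in> NNp N \<Longrightarrow> ys 0 = 0 \<and> (\<forall>j>N. ys j = undefined) \<and> (\<forall>j<N. \<bar>ys (Suc j) - ys j\<bar> = 1)"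
proof (induction N arbitrary: ys)
  case 0 then show ?case by auto
next
  case (Suc N)
  then obtain zs d where zs: "zs \<in> NNp N" "d \<in> {-1,1}" "ys = zs(Suc N := zs N + d)" by auto
  from Suc.IH[OF zs(1)] zs(2,3) show ?case
    by (auto simp: less_Suc_eq)
qed

lemma finite_NNp: "finite (NNp N)"
  by (induction N) auto

lemma inj_NNp_step: "inj_on (\<lambda>(ys,d). ys(Suc N := ys N + (d::int))) (NNp N \<times> {-1,1})"
proof (rule inj_onI)
  fix x y assume x: "x \<in> NNp N \<times> {-1::int,1}" and y: "y \<in> NNp N \<times> {-1::int,1}"
    and eq0: "(\<lambda>(ys,d). ys(Suc N := ys N + (d::int))) x = (\<lambda>(ys,d). ys(Suc N := ys N + d)) y"
  obtain ys d where xd: "x = (ys,d)" by (cases x)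
  obtain ys' d' where yd: "y = (ys',d')" by (cases y)
  have a: "ys \<in> NNp N" "ys' \<in> NNp N" using x y xd yd by auto
  have eq: "ys(Suc N := ys N + d) = ys'(Suc N := ys' N + d')" using eq0 xd yd by simp
  have u: "ys (Suc N) = ys' (Suc N)" using NNp_props[OF a(1)] NNp_props[OF a(2)] by auto
  have "ys = ys'"
  proof
    fix j show "ys j = ys' j" using fun_cong[OF eq, of j] u by (cases "j = Suc N") auto
  qed
  moreover have "d = d'" using fun_cong[OF eq, of "Suc N"] \<open>ys = ys'\<close> by simp
  ultimately show "x = y" using xd yd by simp
qed

lemma pp_upd: assumes "ys \<in> NNp N"
  shows "path_prob p (ys(Suc N := y)) (Suc N) = path_prob p ys N * trans_prob p (ys N) y"
proof -
  have "ys 0 = 0" using NNp_props[OF assms] by simp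
  moreover have "(\<Prod>j<N. trans_prob p ((ys(Suc N := y)) j) ((ys(Suc N := y)) (Suc j)))
      = (\<Prod>j<N. trans_prob p (ys j) (ys (Suc j)))"
    by (intro prod.cong) auto
  ultimately show ?thesis by (simp add: path_prob_def)
qed

lemma sum_NNp_Suc:
  "(\<Sum>ys\<in>NNp (Suc N). path_prob p ys (Suc N) * F ys) =
   (\<Sum>ys\<in>NNp N. path_prob p ys N * (\<Sum>d\<in>{-1,1::int}. trans_prob p (ys N) (ys N + d) * F (ys(Suc N := ys N + d))))"
proof -
  have "(\<Sum>ys\<in>NNp (Suc N). path_prob p ys (Suc N) * F ys) =
    (\<Sum>x\<in>NNp N \<times> {-1,1}. (\<lambda>ys. path_prob p ys (Suc N) * F ys) ((\<lambda>(ys,d). ys(Suc N := ys N + d)) x))"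
    unfolding NNp.simps by (rule sum.reindex[OF inj_NNp_step, unfolded comp_def])
  also have "\<dots> = (\<Sum>ys\<in>NNp N. \<Sum>d\<in>{-1,1::int}. path_prob p (ys(Suc N := ys N + d)) (Suc N) * F (ys(Suc N := ys N + d)))"
    unfolding sum.cartesian_product by (intro sum.cong) (auto simp: case_prod_beta)
  also have "\<dots> = (\<Sum>ys\<in>NNp N. path_prob p ys N * (\<Sum>d\<in>{-1,1::int}. trans_prob p (ys N) (ys N + d) * F (ys(Suc N := ys N + d))))"
    by (intro sum.cong refl) (simp add: pp_upd algebra_simps)
  finally show ?thesis .
qed

lemma tp_sum: "(\<Sum>d\<in>{-1,1::int}. trans_prob p x (x + d)) = 1"
  by (simp add: trans_prob_def)

lemma tp_nonneg: "0 \<le> p \<Longrightarrow> p \<le> 1 \<Longrightarrow> 0 \<le> trans_prob p x y"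
  by (simp add: trans_prob_def)

lemma pp_nonneg: "0 \<le> p \<Longrightarrow> p \<le> 1 \<Longrightarrow> 0 \<le> path_prob p ys n"
  by (simp add: path_prob_def tp_nonneg prod_nonneg)

lemma tp_drift: "x \<noteq> 0 \<Longrightarrow> (\<Sum>d\<in>{-1,1::int}. trans_prob p x (x + d) * \<bar>x + d\<bar>) = \<bar>x\<bar> - (2*p - 1)"
  by (auto simp: trans_prob_def algebra_simps)

lemma sum_pp_NNp: "(\<Sum>ys\<in>NNp N. path_prob p ys N) = 1"
proof (induction N)
  case 0 then show ?case by (simp add: path_prob_def)
next
  case (Suc N)
  have "(\<Sum>ys\<in>NNp (Suc N). path_prob p ys (Suc N)) = (\<Sum>ys\<in>NNp (Suc N). path_prob p ys (Suc N) * 1)" by simp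
  also have "\<dots> = (\<Sum>ys\<in>NNp N. path_prob p ys N)"
    unfolding sum_NNp_Suc by (simp only: mult_1_right tp_sum)
  finally show ?case using Suc by simp
qed

definition Tw :: "(nat \<Rightarrow> int) \<Rightarrow> nat \<Rightarrow> int \<Rightarrow> nat set" where
  "Tw s n i = {j\<in>{1..n}. s j = i \<or> s (j - 1) = i}"

lemma finite_Tw: "finite (Tw s n i)" by (simp add: Tw_def)

lemma lamps_last:
  "lamps e s u v n i = (if Tw s n i = {} then e else
      if s (Max (Tw s n i)) = i then v (Max (Tw s n i)) else u (Max (Tw s n i)))"
proof (induction n)
  case 0 then show ?case by (simp add: Tw_def)
next
  case (Suc n)
  show ?case
  proof (cases "s (Suc n) = i \<or> s n = i")
    case True
    then have T: "Tw s (Suc n) i = insert (Suc n) (Tw s n i)" by (auto simp: Tw_def)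
    have "Max (Tw s (Suc n) i) = Suc n" unfolding T
      by (rule Max_eqI) (auto simp: Tw_def finite_Tw)
    then show ?thesis using True T by auto
  next
    case False
    then have T: "Tw s (Suc n) i = Tw s n i" by (auto simp: Tw_def le_Suc_eq)
    show ?thesis using False T Suc.IH by auto
  qed
qed

lemma Tw_nonempty: "1 \<le> n \<Longrightarrow> Tw s n i \<noteq> {} \<longleftrightarrow> i \<in> s ` {..n}"
proof
  assume "1 \<le> n" "Tw s n i \<noteq> {}"
  then obtain j where "j \<in> Tw s n i" by auto
  then show "i \<in> s ` {..n}" unfolding Tw_def by (auto intro: image_eqI[where x="j - 1"])
next
  assume n: "1 \<le> n" and "i \<in> s ` {..n}"
  then obtain j where j: "j \<le> n" "i = s j" by auto
  show "Tw s n i \<noteq> {}"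
  proof (cases "j = 0")
    case True then have "1 \<in> Tw s n i" using n j by (auto simp: Tw_def)
    then show ?thesis by auto
  next
    case False then have "j \<in> Tw s n i" using n j by (auto simp: Tw_def)
    then show ?thesis by auto
  qed
qed

lemma lamps_cong:
  "(\<forall>j\<le>n. s j = s' j) \<Longrightarrow> (\<forall>j\<in>{1..n}. u j = u' j \<and> v j = v' j) \<Longrightarrow>
    lamps e s u v n = lamps e s' u' v' n"
  by (induction n) auto

lemma card_PiE_fix:
  assumes "K \<subseteq> {1..N}" "c \<in> C" "finite C"
  shows "card {us \<in> PiE {1..N} (\<lambda>_. C). \<forall>t\<in>K. us t = c} = card C ^ (N - card K)"
proof -
  have "{us \<in> PiE {1..N} (\<lambda>_. C). \<forall>t\<in>K. us t = c} = PiE {1..N} (\<lambda>t. if t \<in> K then {c} else C)"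
    using assms by (auto simp: PiE_def Pi_def split: if_splits)
  then have "card {us \<in> PiE {1..N} (\<lambda>_. C). \<forall>t\<in>K. us t = c}
      = (\<Prod>t\<in>{1..N}. card (if t\<in>K then {c} else C))" by (simp add: card_PiE)
  also have "\<dots> = (\<Prod>t\<in>{1..N}. if t\<in>K then 1 else card C)" by (intro prod.cong) auto
  also have "\<dots> = card C ^ card ({1..N} \<inter> - {t. t \<in> K})"
    by (simp add: prod.If_cases)
  also have "{1..N} \<inter> - {t. t \<in> K} = {1..N} - K" by auto
  also have "card ({1..N} - K) = N - card K"
    using assms(1) by (simp add: card_Diff_subset finite_subset)
  finally show ?thesis .
qed

lemma nn_range:
  fixes f :: "nat \<Rightarrow> int"
  assumes "\<forall>j<m. \<bar>f (Suc j) - f j\<bar> = 1"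
  shows "\<exists>a b. a \<le> b \<and> f ` {0..m} = {a..b}"
using assms proof (induction m)
  case 0 then show ?case by (intro exI[of _ "f 0"] exI[of _ "f 0"]) auto
next
  case (Suc m)
  then obtain a b where ab: "a \<le> b" "f ` {0..m} = {a..b}" by auto
  have fm: "f m \<in> {a..b}" using ab by auto
  have d: "\<bar>f (Suc m) - f m\<bar> = 1" using Suc.prems by auto
  have "f ` {0..Suc m} = insert (f (Suc m)) (f ` {0..m})" by (auto simp: atLeast0_atMost_Suc)
  also have "\<dots> = {min a (f (Suc m))..max b (f (Suc m))}"
  proof (intro equalityI subsetI)
    fix y assume "y \<in> insert (f (Suc m)) (f ` {0..m})"
    then show "y \<in> {min a (f (Suc m))..max b (f (Suc m))}"
      using ab fm d by auto
  next
    fix y assume y: "y \<in> {min a (f (Suc m))..max b (f (Suc m))}"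
    show "y \<in> insert (f (Suc m)) (f ` {0..m})"
    proof (cases "y \<in> {a..b}")
      case True then show ?thesis using ab by auto
    next
      case False then have "y = f (Suc m)" using y fm d by (auto simp: abs_if split: if_splits)
      then show ?thesis by auto
    qed
  qed
  finally show ?case using ab by (intro exI[of _ "min a (f(Suc m))"] exI[of _ "max b (f (Suc m))"]) auto
qed

lemma nn_card:
  fixes f :: "nat \<Rightarrow> int"
  assumes "\<forall>j<m. \<bar>f (Suc j) - f j\<bar> = 1"
  shows "int (card (f ` {0..m})) = Max (f ` {0..m}) - Min (f ` {0..m}) + 1"
proof -
  obtain a b where ab: "a \<le> b" "f ` {0..m} = {a..b}" using nn_range[OF assms] by auto
  have "Max {a..b} = b" using ab by (intro Max_eqI) auto
  moreover have "Min {a..b} = a" using ab by (intro Min_eqI) auto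
  ultimately show ?thesis using ab by simp
qed


lemma card_lamps_id:
  fixes G :: "('f,'c) monoid_scheme" and ys :: "nat \<Rightarrow> int"
  assumes one: "\<one>\<^bsub>G\<^esub> \<in> carrier G" and fin: "finite (carrier G)" and m: "1 \<le> m" "m \<le> N"
  shows "real (card {(us,vs). us \<in> PiE {1..N} (\<lambda>_. carrier G) \<and> vs \<in> PiE {1..N} (\<lambda>_. carrier G) \<and>
              (\<forall>i. lamps \<one>\<^bsub>G\<^esub> ys us vs m i = \<one>\<^bsub>G\<^esub>)})
         = real (card (carrier G)) ^ (2*N) / real (card (carrier G)) ^ card (ys ` {..m})"
proof -
  define C where "C = carrier G"
  define e where "e = \<one>\<^bsub>G\<^esub>"
  define Mx where "Mx i = Max (Tw ys m i)" for i
  define Vis where "Vis = ys ` {..m}"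
  define Vu where "Vu = {i\<in>Vis. ys (Mx i) \<noteq> i}"
  define Vv where "Vv = {i\<in>Vis. ys (Mx i) = i}"
  define Ku where "Ku = Mx ` Vu"
  define Kv where "Kv = Mx ` Vv"
  define P where "P = PiE {1..N} (\<lambda>_. C)"
  have TwV: "Tw ys m i = {} \<longleftrightarrow> i \<notin> Vis" for i
    using Tw_nonempty[OF m(1), of ys i] unfolding Vis_def by auto
  have MxT: "Mx i \<in> Tw ys m i" if "i \<in> Vis" for i
    using TwV[of i] that unfolding Mx_def by (intro Max_in finite_Tw) auto
  have Mx1: "Mx i \<in> {1..m}" if "i \<in> Vis" for i using MxT[OF that] by (auto simp: Tw_def)
  have L: "lamps e ys us vs m i = (if i \<in> Vis then (if ys (Mx i) = i then vs (Mx i) else us (Mx i)) else e)"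
    for us vs i using lamps_last[of e ys us vs m i] TwV[of i] unfolding Mx_def by auto
  have lam: "(\<forall>i. lamps e ys us vs m i = e) \<longleftrightarrow> (\<forall>t\<in>Ku. us t = e) \<and> (\<forall>t\<in>Kv. vs t = e)" for us vs
    unfolding L Ku_def Kv_def Vu_def Vv_def by (auto split: if_splits)
  have set_eq: "{(us,vs). us \<in> P \<and> vs \<in> P \<and> (\<forall>i. lamps e ys us vs m i = e)}
      = {us \<in> P. \<forall>t\<in>Ku. us t = e} \<times> {vs \<in> P. \<forall>t\<in>Kv. vs t = e}"
    using lam by auto
  have finV: "finite Vis" unfolding Vis_def by simp
  have injU: "inj_on Mx Vu"
  proof (rule inj_onI)
    fix i j assume i: "i \<in> Vu" and j: "j \<in> Vu" and eq: "Mx i = Mx j"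
    have "ys (Mx i - 1) = i" using MxT[of i] i unfolding Vu_def Tw_def by auto
    moreover have "ys (Mx j - 1) = j" using MxT[of j] j unfolding Vu_def Tw_def by auto
    ultimately show "i = j" using eq by simp
  qed
  have injV: "inj_on Mx Vv"
  proof (rule inj_onI)
    fix i j assume i: "i \<in> Vv" and j: "j \<in> Vv" and eq: "Mx i = Mx j"
    then show "i = j" unfolding Vv_def by (metis (mono_tags, lifting) mem_Collect_eq)
  qed
  have cardV: "card Vis = card Ku + card Kv"
  proof -
    have "Vis = Vu \<union> Vv" "Vu \<inter> Vv = {}" unfolding Vu_def Vv_def by auto
    moreover have "finite Vu" "finite Vv" using finV unfolding Vu_def Vv_def by auto
    ultimately have "card Vis = card Vu + card Vv" by (simp add: card_Un_disjoint)
    also have "card Vu = card Ku" unfolding Ku_def using injU by (simp add: card_image)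
    also have "card Vv = card Kv" unfolding Kv_def using injV by (simp add: card_image)
    finally show ?thesis .
  qed
  have KuS: "Ku \<subseteq> {1..N}" "Kv \<subseteq> {1..N}" using Mx1 m unfolding Ku_def Kv_def Vu_def Vv_def by force+
  have cKu: "card Ku \<le> N" "card Kv \<le> N" using card_mono[OF _ KuS(1)] card_mono[OF _ KuS(2)] by auto
  have eC: "e \<in> C" using one unfolding e_def C_def .
  have finC: "finite C" using fin unfolding C_def .
  define q where "q = real (card C)"
  have qpos: "q > 0" using eC finC unfolding q_def by (auto simp: card_gt_0_iff)
  have "card {(us,vs). us \<in> P \<and> vs \<in> P \<and> (\<forall>i. lamps e ys us vs m i = e)}
      = card C ^ (N - card Ku) * card C ^ (N - card Kv)"
    unfolding set_eq card_cartesian_product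
    using card_PiE_fix[OF KuS(1) eC finC] card_PiE_fix[OF KuS(2) eC finC] by (simp add: P_def)
  then have "real (card {(us,vs). us \<in> P \<and> vs \<in> P \<and> (\<forall>i. lamps e ys us vs m i = e)})
      = q ^ (N - card Ku) * q ^ (N - card Kv)" unfolding q_def by simp
  also have "\<dots> = q ^ (2*N) / q ^ card Vis"
  proof -
    have a: "q ^ (N - card Ku) * q ^ card Ku = q ^ N" using cKu by (simp add: power_add[symmetric])
    have b: "q ^ (N - card Kv) * q ^ card Kv = q ^ N" using cKu by (simp add: power_add[symmetric])
    have "q ^ (N - card Ku) * q ^ (N - card Kv) * q ^ card Vis
        = (q ^ (N - card Ku) * q ^ card Ku) * (q ^ (N - card Kv) * q ^ card Kv)"
      unfolding cardV by (simp add: power_add mult_ac)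
    also have "\<dots> = q ^ (2*N)" unfolding a b by (simp add: mult_2 power_add)
    finally show ?thesis using qpos by (simp add: eq_divide_eq)
  qed
  finally show ?thesis unfolding q_def Vis_def P_def C_def e_def .
qed

definition tr :: "nat \<Rightarrow> (nat \<Rightarrow> int) \<Rightarrow> nat \<Rightarrow> int" where
  "tr N s j = (if j \<le> N then s j else 1)"

lemma rho_tr_eventually: "eventually (\<lambda>N. rho (tr N s) k = rho s k) sequentially"
proof (induction k)
  case 0 then show ?case by simp
next
  case (Suc k)
  define r where "r = rho s k"
  show ?case
  proof (cases "\<exists>n>r. s n = 0")
    case True
    define n0 where "n0 = (LEAST n. n > r \<and> s n = 0)"
    have n0: "n0 > r" "s n0 = 0" using LeastI_ex[OF True] unfolding n0_def by auto
    have n0le: "n0 \<le> y" if "y > r" "s y = 0" for y using that unfolding n0_def by (simp add: Least_le)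
    have "eventually (\<lambda>N. rho (tr N s) k = rho s k \<and> N \<ge> n0) sequentially"
      using Suc.IH eventually_ge_at_top[of n0] by (rule eventually_conj)
    then show ?thesis
    proof (rule eventually_mono)
      fix N assume N: "rho (tr N s) k = rho s k \<and> N \<ge> n0"
      have "(LEAST n. n > r \<and> tr N s n = 0) = n0"
      proof (rule Least_equality)
        show "n0 > r \<and> tr N s n0 = 0" using n0 N by (simp add: tr_def)
        fix y assume "y > r \<and> tr N s y = 0"
        then show "n0 \<le> y" using n0le by (auto simp: tr_def split: if_splits)
      qed
      moreover have "(LEAST n. n > r \<and> s n = 0) = n0" unfolding n0_def ..
      ultimately show "rho (tr N s) (Suc k) = rho s (Suc k)" using N unfolding r_def by simp
    qed
  next
    case False
    have eqp: "(\<lambda>n. n > r \<and> tr N s n = 0) = (\<lambda>n. n > r \<and> s n = 0)" for N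
      using False by (auto simp: tr_def fun_eq_iff)
    show ?thesis using Suc.IH
    proof (rule eventually_mono)
      fix N assume "rho (tr N s) k = rho s k"
      then show "rho (tr N s) (Suc k) = rho s (Suc k)" using eqp[of N] unfolding r_def by simp
    qed
  qed
qed

lemma rho_zero_finite: "rho s (Suc j) = 0 \<Longrightarrow> \<exists>r. \<forall>n>r. s n \<noteq> 0"
proof (rule ccontr)
  assume a: "rho s (Suc j) = 0" and "\<not> (\<exists>r. \<forall>n>r. s n \<noteq> 0)"
  then have "\<exists>n>rho s j. s n = 0" by auto
  from LeastI_ex[OF this] have "(LEAST n. n > rho s j \<and> s n = 0) > rho s j" by simp
  with a show False by simp
qed

lemma rho_meas[measurable]:
  assumes [measurable]: "\<And>j. F j \<in> measurable M (count_space UNIV)"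
  shows "(\<lambda>w. rho (\<lambda>j. F j w) k) \<in> measurable M (count_space UNIV)"
proof (induction k)
  case 0 then show ?case by simp
next
  case (Suc k)
  note [measurable] = Suc
  show ?case by simp
qed

lemma lamps_meas[measurable]:
  assumes [measurable]: "\<And>j. F j \<in> measurable M (count_space UNIV)"
    "\<And>j. Uf j \<in> measurable M (count_space UNIV)" "\<And>j. Vf j \<in> measurable M (count_space UNIV)"
  shows "(\<lambda>w. lamps e (\<lambda>j. F j w) (\<lambda>j. Uf j w) (\<lambda>j. Vf j w) n i) \<in> measurable M (count_space UNIV)"
proof (induction n arbitrary: i)
  case 0 then show ?case by simp
next
  case (Suc n)
  note [measurable] = Suc
  have "(\<lambda>w. lamps e (\<lambda>j. F j w) (\<lambda>j. Uf j w) (\<lambda>j. Vf j w) (Suc n) i)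
     = (\<lambda>w. if i = F (Suc n) w then Vf (Suc n) w else if i = F n w then Uf (Suc n) w
            else lamps e (\<lambda>j. F j w) (\<lambda>j. Uf j w) (\<lambda>j. Vf j w) n i)" by auto
  also have "\<dots> \<in> measurable M (count_space UNIV)" by measurable
  finally show ?case .
qed


definition rS :: "(nat \<Rightarrow> 'w \<Rightarrow> 'a) \<Rightarrow> nat set \<Rightarrow> 'w \<Rightarrow> nat \<Rightarrow> 'a" where
  "rS X I w = restrict (\<lambda>j. X j w) I"

lemma sum3: "(\<Sum>\<omega>\<in>A \<times> B \<times> C. f \<omega>) = (\<Sum>a\<in>A. \<Sum>b\<in>B. \<Sum>c\<in>C. f (a,b,c))"
  unfolding sum.cartesian_product by (rule sum.cong) auto

lemma sum2_if: "finite A \<Longrightarrow> finite B \<Longrightarrow>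
  (\<Sum>us\<in>A. \<Sum>vs\<in>B. if R us vs then (c::real) else 0) = c * real (card {(us,vs). us\<in>A \<and> vs\<in>B \<and> R us vs})"
proof -
  assume fin: "finite A" "finite B"
  have "(\<Sum>us\<in>A. \<Sum>vs\<in>B. if R us vs then c else 0) = (\<Sum>x\<in>A\<times>B. if case_prod R x then c else 0)"
    unfolding sum.cartesian_product by (rule sum.cong) auto
  also have "\<dots> = (\<Sum>x\<in>{x\<in>A\<times>B. case_prod R x}. c)"
    by (rule sum.inter_filter[symmetric]) (use fin in auto)
  also have "{x\<in>A\<times>B. case_prod R x} = {(us,vs). us\<in>A \<and> vs\<in>B \<and> R us vs}" by auto
  finally show ?thesis by simp
qed

context
  fixes G :: "('f, 'c) monoid_scheme" and M :: "'w measure" and p :: real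
    and S :: "nat \<Rightarrow> 'w \<Rightarrow> int" and U V :: "nat \<Rightarrow> 'w \<Rightarrow> 'f"
  assumes grp: "group G" and finC: "finite (carrier G)"
    and p1: "1/2 < p" and p2: "p < 1"
    and PS: "prob_space M"
    and mS[measurable]: "\<And>n. S n \<in> measurable M (count_space UNIV)"
    and mU[measurable]: "\<And>n. U n \<in> measurable M (count_space UNIV)"
    and mV[measurable]: "\<And>n. V n \<in> measurable M (count_space UNIV)"
    and law: "\<And>n xs us vs. (\<forall>j. us j \<in> carrier G \<and> vs j \<in> carrier G) \<Longrightarrow>
         measure M {w \<in> space M. (\<forall>j\<le>n. S j w = xs j) \<and>
                                  (\<forall>j\<in>{1..n}. U j w = us j \<and> V j w = vs j)}
         = path_prob p xs n / real (card (carrier G)) ^ (2 * n)"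
begin

lemma one_C: "\<one>\<^bsub>G\<^esub> \<in> carrier G"
  using grp by (simp add: group.is_monoid monoid.one_closed)

lemma qq_pos: "real (card (carrier G)) > 0"
  using one_C finC by (auto simp: card_gt_0_iff)

lemma card_PP: "card (PiE {1..N} (\<lambda>_. carrier G)) = card (carrier G) ^ N"
  by (simp add: card_PiE)

lemma fib_meas:
  assumes ys: "ys \<in> NNp N" and us: "us \<in> PiE {1..N} (\<lambda>_. carrier G)" and vs: "vs \<in> PiE {1..N} (\<lambda>_. carrier G)"
  shows "{w\<in>space M. rS S {..N} w = ys \<and> rS U {1..N} w = us \<and> rS V {1..N} w = vs} \<in> sets M"
    "measure M {w\<in>space M. rS S {..N} w = ys \<and> rS U {1..N} w = us \<and> rS V {1..N} w = vs}
      = path_prob p ys N / real (card (carrier G)) ^ (2 * N)"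
proof -
  define us' where "us' j = (if j \<in> {1..N} then us j else \<one>\<^bsub>G\<^esub>)" for j
  define vs' where "vs' j = (if j \<in> {1..N} then vs j else \<one>\<^bsub>G\<^esub>)" for j
  have ysu: "\<forall>j>N. ys j = undefined" using NNp_props[OF ys] by simp
  have e1: "rS S {..N} w = ys \<longleftrightarrow> (\<forall>j\<le>N. S j w = ys j)" for w
    using ysu by (auto simp: rS_def fun_eq_iff restrict_def)
  have e2: "rS U {1..N} w = us \<longleftrightarrow> (\<forall>j\<in>{1..N}. U j w = us' j)" for w
    using us by (auto simp: rS_def fun_eq_iff restrict_def us'_def PiE_def extensional_def)
  have e3: "rS V {1..N} w = vs \<longleftrightarrow> (\<forall>j\<in>{1..N}. V j w = vs' j)" for w
    using vs by (auto simp: rS_def fun_eq_iff restrict_def vs'_def PiE_def extensional_def)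
  have eq: "{w\<in>space M. rS S {..N} w = ys \<and> rS U {1..N} w = us \<and> rS V {1..N} w = vs}
    = {w \<in> space M. (\<forall>j\<le>N. S j w = ys j) \<and> (\<forall>j\<in>{1..N}. U j w = us' j \<and> V j w = vs' j)}"
    unfolding e1 e2 e3 by auto
  show "{w\<in>space M. rS S {..N} w = ys \<and> rS U {1..N} w = us \<and> rS V {1..N} w = vs} \<in> sets M"
    unfolding eq by measurable
  have "\<forall>j. us' j \<in> carrier G \<and> vs' j \<in> carrier G"
    using us vs one_C by (auto simp: us'_def vs'_def PiE_def Pi_def)
  from law[OF this, of N ys] show "measure M {w\<in>space M. rS S {..N} w = ys \<and> rS U {1..N} w = us \<and> rS V {1..N} w = vs}
      = path_prob p ys N / real (card (carrier G)) ^ (2 * N)"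
    unfolding eq .
qed

lemma decomp:
  assumes X: "{w\<in>space M. \<Psi> (rS S {..N} w) (rS U {1..N} w) (rS V {1..N} w)} \<in> sets M"
  shows "measure M {w\<in>space M. \<Psi> (rS S {..N} w) (rS U {1..N} w) (rS V {1..N} w)}
    = (\<Sum>ys\<in>NNp N. \<Sum>us\<in>PiE {1..N} (\<lambda>_. carrier G). \<Sum>vs\<in>PiE {1..N} (\<lambda>_. carrier G).
         if \<Psi> ys us vs then path_prob p ys N / real (card (carrier G)) ^ (2*N) else 0)"
proof -
  interpret P: prob_space M by (rule PS)
  define PP where "PP = PiE {1..N} (\<lambda>_. carrier G)"
  define q where "q = real (card (carrier G))"
  define \<Omega> where "\<Omega> = NNp N \<times> PP \<times> PP"
  define fb where "fb = (\<lambda>(ys,us,vs). {w\<in>space M. rS S {..N} w = ys \<and> rS U {1..N} w = us \<and> rS V {1..N} w = vs})"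
  have finPP: "finite PP" unfolding PP_def using finC by (auto intro!: finite_PiE)
  have fin\<Omega>: "finite \<Omega>" unfolding \<Omega>_def using finite_NNp finPP by auto
  have fbs: "fb \<omega> \<in> sets M" if "\<omega> \<in> \<Omega>" for \<omega>
    using that fib_meas(1) unfolding fb_def \<Omega>_def PP_def by auto
  have fbm: "measure M (fb \<omega>) = path_prob p (fst \<omega>) N / q ^ (2*N)" if "\<omega> \<in> \<Omega>" for \<omega>
    using that fib_meas(2) unfolding fb_def \<Omega>_def PP_def q_def by auto
  have disj: "disjoint_family_on fb A" for A unfolding disjoint_family_on_def fb_def by auto
  define Gs where "Gs = (\<Union>\<omega>\<in>\<Omega>. fb \<omega>)"
  have Gs_sets: "Gs \<in> sets M" unfolding Gs_def using fin\<Omega> fbs by auto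
  have "measure M Gs = (\<Sum>\<omega>\<in>\<Omega>. measure M (fb \<omega>))" unfolding Gs_def
    by (rule P.finite_measure_finite_Union) (use fin\<Omega> fbs disj in auto)
  also have "\<dots> = (\<Sum>\<omega>\<in>\<Omega>. path_prob p (fst \<omega>) N / q ^ (2*N))" by (intro sum.cong) (auto simp: fbm)
  also have "\<dots> = (\<Sum>ys\<in>NNp N. \<Sum>us\<in>PP. \<Sum>vs\<in>PP. path_prob p ys N / q ^ (2*N))"
    unfolding \<Omega>_def sum3 by simp
  also have "\<dots> = (\<Sum>ys\<in>NNp N. path_prob p ys N)"
  proof (intro sum.cong refl)
    fix ys
    have "(\<Sum>us\<in>PP. \<Sum>vs\<in>PP. path_prob p ys N / q ^ (2*N)) = q^N * q^N * (path_prob p ys N / q ^ (2*N))"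
      unfolding sum_constant PP_def card_PP q_def by simp
    also have "\<dots> = path_prob p ys N" using qq_pos unfolding q_def by (simp add: mult_2 power_add)
    finally show "(\<Sum>us\<in>PP. \<Sum>vs\<in>PP. path_prob p ys N / q ^ (2*N)) = path_prob p ys N" .
  qed
  also have "\<dots> = 1" by (rule sum_pp_NNp)
  finally have mG: "measure M Gs = 1" .
  have null: "space M - Gs \<in> null_sets M"
  proof -
    have "measure M (space M - Gs) = 0" using P.prob_compl[OF Gs_sets] mG by simp
    then show ?thesis using Gs_sets by (simp add: P.emeasure_eq_measure null_setsI)
  qed
  define X' where "X' = {w\<in>space M. \<Psi> (rS S {..N} w) (rS U {1..N} w) (rS V {1..N} w)}"
  have "measure M X' = measure M (X' - (space M - Gs))"
    using measure_Diff_null_set[OF X null] unfolding X'_def by simp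
  also have "X' - (space M - Gs) = (\<Union>\<omega>\<in>{\<omega>\<in>\<Omega>. case_prod (\<lambda>ys. case_prod (\<Psi> ys)) \<omega>}. fb \<omega>)"
    unfolding X'_def Gs_def fb_def by auto
  also have "measure M \<dots> = (\<Sum>\<omega>\<in>{\<omega>\<in>\<Omega>. case_prod (\<lambda>ys. case_prod (\<Psi> ys)) \<omega>}. measure M (fb \<omega>))"
    by (rule P.finite_measure_finite_Union) (use fin\<Omega> fbs disj in auto)
  also have "\<dots> = (\<Sum>\<omega>\<in>\<Omega>. if case_prod (\<lambda>ys. case_prod (\<Psi> ys)) \<omega> then path_prob p (fst \<omega>) N / q ^ (2*N) else 0)"
    using fin\<Omega> by (simp add: sum.inter_filter[symmetric] fbm)
  also have "\<dots> = (\<Sum>ys\<in>NNp N. \<Sum>us\<in>PP. \<Sum>vs\<in>PP. if \<Psi> ys us vs then path_prob p ys N / q ^ (2*N) else 0)"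
    unfolding \<Omega>_def sum3 by (simp only: fst_conv prod.case)
  finally show ?thesis unfolding X'_def PP_def q_def .
qed


lemma decomp_S:
  assumes X: "{w\<in>space M. \<Phi> (rS S {..N} w)} \<in> sets M"
  shows "measure M {w\<in>space M. \<Phi> (rS S {..N} w)} = (\<Sum>ys\<in>NNp N. if \<Phi> ys then path_prob p ys N else 0)"
proof -
  define PP where "PP = PiE {1..N} (\<lambda>_. carrier G)"
  define q where "q = real (card (carrier G))"
  have "measure M {w\<in>space M. \<Phi> (rS S {..N} w)} =
     (\<Sum>ys\<in>NNp N. \<Sum>us\<in>PP. \<Sum>vs\<in>PP. if \<Phi> ys then path_prob p ys N / q ^ (2*N) else 0)"
    using decomp[of "\<lambda>ys us vs. \<Phi> ys" N] X unfolding PP_def q_def by simp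
  also have "\<dots> = (\<Sum>ys\<in>NNp N. if \<Phi> ys then path_prob p ys N else 0)"
  proof (intro sum.cong refl)
    fix ys
    show "(\<Sum>us\<in>PP. \<Sum>vs\<in>PP. if \<Phi> ys then path_prob p ys N / q ^ (2*N) else 0) = (if \<Phi> ys then path_prob p ys N else 0)"
    proof (cases "\<Phi> ys")
      case True
      have "(\<Sum>us\<in>PP. \<Sum>vs\<in>PP. if \<Phi> ys then path_prob p ys N / q ^ (2*N) else 0)
          = q^N * q^N * (path_prob p ys N / q ^ (2*N))"
        unfolding sum_constant PP_def card_PP q_def using True by simp
      also have "\<dots> = path_prob p ys N" using qq_pos unfolding q_def by (simp add: mult_2 power_add)
      finally show ?thesis using True by simp
    qed simp
  qed
  finally show ?thesis .
qed

lemma key_N: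
  assumes m: "1 \<le> m" "m \<le> N"
    and XS: "{w\<in>space M. (\<forall>i. lamps \<one>\<^bsub>G\<^esub> (rS S {..N} w) (rS U {1..N} w) (rS V {1..N} w) m i = \<one>\<^bsub>G\<^esub>)
              \<and> Q (rS S {..N} w) \<and> (\<forall>j\<le>m. rS S {..N} w j = xs j)} \<in> sets M"
    and YS: "{w\<in>space M. Q (rS S {..N} w) \<and> (\<forall>j\<le>m. rS S {..N} w j = xs j)} \<in> sets M"
  shows "measure M {w\<in>space M. (\<forall>i. lamps \<one>\<^bsub>G\<^esub> (rS S {..N} w) (rS U {1..N} w) (rS V {1..N} w) m i = \<one>\<^bsub>G\<^esub>)
              \<and> Q (rS S {..N} w) \<and> (\<forall>j\<le>m. rS S {..N} w j = xs j)}
    = real (card (carrier G)) powi (- (Max (xs ` {0..m}) - Min (xs ` {0..m}) + 1))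
      * measure M {w\<in>space M. Q (rS S {..N} w) \<and> (\<forall>j\<le>m. rS S {..N} w j = xs j)}"
proof -
  define q where "q = real (card (carrier G))"
  define c where "c = q powi (- (Max (xs ` {0..m}) - Min (xs ` {0..m}) + 1))"
  define PP where "PP = PiE {1..N} (\<lambda>_. carrier G)"
  have finPP: "finite PP" unfolding PP_def using finC by (auto intro!: finite_PiE)
  have cval: "1 / q ^ card (ys ` {..m}) = c" if ys: "ys \<in> NNp N" "\<forall>j\<le>m. ys j = xs j" for ys
  proof -
    have im: "ys ` {..m} = xs ` {0..m}" using ys(2) by (auto simp: atMost_atLeast0 intro!: image_cong)
    have nn: "\<forall>j<m. \<bar>xs (Suc j) - xs j\<bar> = 1"
    proof (intro allI impI)
      fix j assume j: "j < m"
      then have "\<bar>ys (Suc j) - ys j\<bar> = 1" using NNp_props[OF ys(1)] m by auto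
      then show "\<bar>xs (Suc j) - xs j\<bar> = 1" using ys(2) j by simp
    qed
    have "int (card (xs ` {0..m})) = Max (xs ` {0..m}) - Min (xs ` {0..m}) + 1" by (rule nn_card[OF nn])
    then have "c = q powi (- int (card (xs ` {0..m})))" unfolding c_def by simp
    also have "\<dots> = 1 / q ^ card (xs ` {0..m})" by (simp add: power_int_minus divide_inverse)
    finally show ?thesis using im by simp
  qed
  have LHS: "measure M {w\<in>space M. (\<forall>i. lamps \<one>\<^bsub>G\<^esub> (rS S {..N} w) (rS U {1..N} w) (rS V {1..N} w) m i = \<one>\<^bsub>G\<^esub>)
              \<and> Q (rS S {..N} w) \<and> (\<forall>j\<le>m. rS S {..N} w j = xs j)}
    = (\<Sum>ys\<in>NNp N. if Q ys \<and> (\<forall>j\<le>m. ys j = xs j) then path_prob p ys N * c else 0)"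
  proof -
    have "measure M {w\<in>space M. (\<forall>i. lamps \<one>\<^bsub>G\<^esub> (rS S {..N} w) (rS U {1..N} w) (rS V {1..N} w) m i = \<one>\<^bsub>G\<^esub>)
              \<and> Q (rS S {..N} w) \<and> (\<forall>j\<le>m. rS S {..N} w j = xs j)}
      = (\<Sum>ys\<in>NNp N. \<Sum>us\<in>PP. \<Sum>vs\<in>PP. if (\<forall>i. lamps \<one>\<^bsub>G\<^esub> ys us vs m i = \<one>\<^bsub>G\<^esub>) \<and> Q ys \<and> (\<forall>j\<le>m. ys j = xs j)
            then path_prob p ys N / q ^ (2*N) else 0)"
      using decomp[of "\<lambda>ys us vs. (\<forall>i. lamps \<one>\<^bsub>G\<^esub> ys us vs m i = \<one>\<^bsub>G\<^esub>) \<and> Q ys \<and> (\<forall>j\<le>m. ys j = xs j)" N] XS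
      unfolding PP_def q_def by simp
    also have "\<dots> = (\<Sum>ys\<in>NNp N. if Q ys \<and> (\<forall>j\<le>m. ys j = xs j) then path_prob p ys N * c else 0)"
    proof (intro sum.cong refl)
      fix ys assume ys: "ys \<in> NNp N"
      show "(\<Sum>us\<in>PP. \<Sum>vs\<in>PP. if (\<forall>i. lamps \<one>\<^bsub>G\<^esub> ys us vs m i = \<one>\<^bsub>G\<^esub>) \<and> Q ys \<and> (\<forall>j\<le>m. ys j = xs j)
            then path_prob p ys N / q ^ (2*N) else 0) = (if Q ys \<and> (\<forall>j\<le>m. ys j = xs j) then path_prob p ys N * c else 0)"
      proof (cases "Q ys \<and> (\<forall>j\<le>m. ys j = xs j)")
        case True
        then have "(\<Sum>us\<in>PP. \<Sum>vs\<in>PP. if (\<forall>i. lamps \<one>\<^bsub>G\<^esub> ys us vs m i = \<one>\<^bsub>G\<^esub>) \<and> Q ys \<and> (\<forall>j\<le>m. ys j = xs j)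
            then path_prob p ys N / q ^ (2*N) else 0) = (\<Sum>us\<in>PP. \<Sum>vs\<in>PP. if (\<forall>i. lamps \<one>\<^bsub>G\<^esub> ys us vs m i = \<one>\<^bsub>G\<^esub>)
            then path_prob p ys N / q ^ (2*N) else 0)" by simp
        also have "\<dots> = path_prob p ys N / q ^ (2*N) * real (card {(us,vs). us \<in> PP \<and> vs \<in> PP \<and> (\<forall>i. lamps \<one>\<^bsub>G\<^esub> ys us vs m i = \<one>\<^bsub>G\<^esub>)})"
          by (rule sum2_if[OF finPP finPP])
        also have "\<dots> = path_prob p ys N / q ^ (2*N) * (q ^ (2*N) / q ^ card (ys ` {..m}))"
          using card_lamps_id[OF one_C finC m, of ys] unfolding PP_def q_def by simp
        also have "\<dots> = path_prob p ys N * (1 / q ^ card (ys ` {..m}))"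
          using qq_pos unfolding q_def by simp
        also have "\<dots> = path_prob p ys N * c" using cval[OF ys] True by simp
        finally show ?thesis using True by simp
      next
        case False
        then show ?thesis by (auto intro!: sum.neutral)
      qed
    qed
    finally show ?thesis .
  qed
  have RHS: "measure M {w\<in>space M. Q (rS S {..N} w) \<and> (\<forall>j\<le>m. rS S {..N} w j = xs j)}
     = (\<Sum>ys\<in>NNp N. if Q ys \<and> (\<forall>j\<le>m. ys j = xs j) then path_prob p ys N else 0)"
    using decomp_S[of "\<lambda>ys. Q ys \<and> (\<forall>j\<le>m. ys j = xs j)" N] YS by simp
  show ?thesis unfolding LHS RHS c_def[symmetric] q_def[symmetric]
    by (auto simp: sum_distrib_left intro!: sum.cong)
qed


lemma tp_drift': "x \<noteq> 0 \<Longrightarrow> (\<Sum>d\<in>{-1,1::int}. trans_prob p x (x + d) * real_of_int \<bar>x + d\<bar>) = real_of_int \<bar>x\<bar> - (2*p - 1)"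
  by (auto simp: trans_prob_def algebra_simps)

lemma cond_upd: "r < Suc N \<Longrightarrow> (\<forall>n\<in>{r<..Suc N}. (ys(Suc N := y)) n \<noteq> (0::int)) \<longleftrightarrow> (\<forall>n\<in>{r<..N}. ys n \<noteq> 0) \<and> y \<noteq> 0"
  by (auto simp: le_Suc_eq)

lemma recurrence: "measure M {w\<in>space M. \<forall>n>r. S n w \<noteq> 0} = 0"
proof -
  interpret P: prob_space M by (rule PS)
  define cN where "cN N ys \<longleftrightarrow> (\<forall>n\<in>{r<..N}. ys n \<noteq> (0::int))" for N ys
  define B where "B N = (\<Sum>ys\<in>NNp N. path_prob p ys N * (if cN N ys then 1 else 0))" for N
  define A where "A N = (\<Sum>ys\<in>NNp N. path_prob p ys N * (if cN N ys then real_of_int \<bar>ys N\<bar> else 0))" for N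
  define \<delta> where "\<delta> = 2*p - 1"
  have \<delta>: "\<delta> > 0" using p1 unfolding \<delta>_def by simp
  have p0: "0 \<le> p" "p \<le> 1" using p1 p2 by auto
  have cu: "cN (Suc N) (ys(Suc N := y)) \<longleftrightarrow> cN N ys \<and> y \<noteq> 0" if "r < N" for N ys y
    unfolding cN_def using cond_upd[of r N ys y] that by simp
  have stepA: "A (Suc N) = A N - \<delta> * B N" if rN: "r < N" for N
  proof -
    have "A (Suc N) = (\<Sum>ys\<in>NNp N. path_prob p ys N * (\<Sum>d\<in>{-1,1::int}. trans_prob p (ys N) (ys N + d) *
        (if cN (Suc N) (ys(Suc N := ys N + d)) then real_of_int \<bar>(ys(Suc N := ys N + d)) (Suc N)\<bar> else 0)))"
      unfolding A_def by (rule sum_NNp_Suc)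
    also have "\<dots> = (\<Sum>ys\<in>NNp N. path_prob p ys N * (if cN N ys then real_of_int \<bar>ys N\<bar> - \<delta> else 0))"
    proof (intro sum.cong refl arg_cong2[where f="(*)"])
      fix ys :: "nat \<Rightarrow> int"
      show "(\<Sum>d\<in>{-1,1::int}. trans_prob p (ys N) (ys N + d) *
        (if cN (Suc N) (ys(Suc N := ys N + d)) then real_of_int \<bar>(ys(Suc N := ys N + d)) (Suc N)\<bar> else 0))
        = (if cN N ys then real_of_int \<bar>ys N\<bar> - \<delta> else 0)"
      proof (cases "cN N ys")
        case True
        then have x0: "ys N \<noteq> 0" unfolding cN_def using rN by auto
        have "(\<Sum>d\<in>{-1,1::int}. trans_prob p (ys N) (ys N + d) *
          (if cN (Suc N) (ys(Suc N := ys N + d)) then real_of_int \<bar>(ys(Suc N := ys N + d)) (Suc N)\<bar> else 0))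
          = (\<Sum>d\<in>{-1,1::int}. trans_prob p (ys N) (ys N + d) * real_of_int \<bar>ys N + d\<bar>)"
          by (intro sum.cong refl) (auto simp: cu[OF rN] True)
        also have "\<dots> = real_of_int \<bar>ys N\<bar> - \<delta>" unfolding \<delta>_def by (rule tp_drift'[OF x0])
        finally show ?thesis using True by simp
      next
        case False then show ?thesis by (simp add: cu[OF rN])
      qed
    qed
    also have "\<dots> = A N - \<delta> * B N"
    proof -
      have "\<And>ys. path_prob p ys N * (if cN N ys then real_of_int \<bar>ys N\<bar> - \<delta> else 0)
          = path_prob p ys N * (if cN N ys then real_of_int \<bar>ys N\<bar> else 0) - \<delta> * (path_prob p ys N * (if cN N ys then 1 else 0))"
        by (auto simp: algebra_simps)
      then show ?thesis unfolding A_def B_def sum_distrib_left sum_subtractf[symmetric] by simp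
    qed
    finally show ?thesis .
  qed
  have stepB: "B (Suc N) \<le> B N" if rN: "r < N" for N
  proof -
    have "B (Suc N) = (\<Sum>ys\<in>NNp N. path_prob p ys N * (\<Sum>d\<in>{-1,1::int}. trans_prob p (ys N) (ys N + d) *
        (if cN (Suc N) (ys(Suc N := ys N + d)) then 1 else 0)))"
      unfolding B_def by (rule sum_NNp_Suc)
    also have "\<dots> \<le> B N" unfolding B_def
    proof (intro sum_mono mult_left_mono)
      fix ys :: "nat \<Rightarrow> int"
      show "0 \<le> path_prob p ys N" using pp_nonneg[OF p0] .
      show "(\<Sum>d\<in>{-1,1::int}. trans_prob p (ys N) (ys N + d) * (if cN (Suc N) (ys(Suc N := ys N + d)) then 1 else 0))
         \<le> (if cN N ys then 1 else 0)"
      proof (cases "cN N ys")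
        case True
        have "(\<Sum>d\<in>{-1,1::int}. trans_prob p (ys N) (ys N + d) * (if cN (Suc N) (ys(Suc N := ys N + d)) then 1 else 0))
          \<le> (\<Sum>d\<in>{-1,1::int}. trans_prob p (ys N) (ys N + d))"
          by (intro sum_mono) (auto simp: tp_nonneg[OF p0])
        also have "\<dots> = 1" by (rule tp_sum)
        finally show ?thesis using True by simp
      next
        case False then show ?thesis by (simp add: cu[OF rN])
      qed
    qed
    finally show ?thesis .
  qed
  have A0: "0 \<le> A N" for N
    unfolding A_def by (intro sum_nonneg mult_nonneg_nonneg) (auto intro: pp_nonneg[OF p0])
  have bound: "A (Suc r + t) + \<delta> * real t * B (Suc r + t) \<le> A (Suc r)" for t
  proof (induction t)
    case 0 then show ?case by simp
  next
    case (Suc t)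
    have h0: "A (Suc r + Suc t) = A (Suc r + t) - \<delta> * B (Suc r + t)"
      using stepA[of "Suc r + t"] by simp
    have h1: "B (Suc r + Suc t) \<le> B (Suc r + t)" using stepB[of "Suc r + t"] by simp
    have h2: "\<delta> * real (Suc t) * B (Suc r + Suc t) \<le> \<delta> * real (Suc t) * B (Suc r + t)"
      using h1 \<delta> by (intro mult_left_mono) auto
    have h3: "\<delta> * real (Suc t) * B (Suc r + t) = \<delta> * real t * B (Suc r + t) + \<delta> * B (Suc r + t)"
      by (simp add: algebra_simps)
    show ?case using Suc.IH h0 h2 h3 by linarith
  qed
  have BN: "measure M {w\<in>space M. \<forall>n\<in>{r<..N}. S n w \<noteq> 0} = B N" for N
  proof -
    have eq: "{w\<in>space M. \<forall>n\<in>{r<..N}. S n w \<noteq> 0} = {w\<in>space M. cN N (rS S {..N} w)}"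
      unfolding cN_def rS_def by auto
    have ms: "{w\<in>space M. \<forall>n\<in>{r<..N}. S n w \<noteq> 0} \<in> sets M" by measurable
    show ?thesis unfolding eq B_def using decomp_S[of "cN N" N] ms eq
      by (auto intro!: sum.cong)
  qed
  define Z where "Z = {w\<in>space M. \<forall>n>r. S n w \<noteq> 0}"
  have Zle: "measure M Z \<le> (A (Suc r) / \<delta>) / real t" if t: "t \<ge> 1" for t
  proof -
    have "measure M Z \<le> measure M {w\<in>space M. \<forall>n\<in>{r<..Suc r + t}. S n w \<noteq> 0}"
      unfolding Z_def by (rule P.finite_measure_mono) auto
    also have "\<dots> = B (Suc r + t)" by (rule BN)
    also have "\<dots> \<le> (A (Suc r) / \<delta>) / real t"
    proof -
      have "\<delta> * real t * B (Suc r + t) \<le> A (Suc r)" using bound[of t] A0[of "Suc r + t"] by linarith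
      moreover have "\<delta> * real t > 0" using \<delta> t by simp
      ultimately show ?thesis by (simp add: field_simps)
    qed
    finally show ?thesis .
  qed
  have "measure M Z \<le> 0"
  proof (rule LIMSEQ_le_const)
    show "(\<lambda>t. (A (Suc r) / \<delta>) / real t) \<longlonglongrightarrow> 0" by (rule lim_const_over_n)
    show "\<exists>N. \<forall>n\<ge>N. measure M Z \<le> A (Suc r) / \<delta> / real n" using Zle by auto
  qed
  then show ?thesis unfolding Z_def using measure_nonneg[of M] by (simp add: antisym)
qed

lemma meas_conv:
  assumes "\<And>N. A N \<in> sets M" "B \<in> sets M"
    "\<And>w. w \<in> space M \<Longrightarrow> eventually (\<lambda>N. w \<in> A N \<longleftrightarrow> w \<in> B) sequentially"
  shows "(\<lambda>N. measure M (A N)) \<longlonglongrightarrow> measure M B"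
proof -
  interpret P: prob_space M by (rule PS)
  have "(\<lambda>N. integral\<^sup>L M (indicator (A N) :: 'w \<Rightarrow> real)) \<longlonglongrightarrow> integral\<^sup>L M (indicator B)"
  proof (rule integral_dominated_convergence[where w="\<lambda>_. 1"])
    show "indicator B \<in> borel_measurable M" using assms(2) by simp
    show "\<And>N. indicator (A N) \<in> borel_measurable M" using assms(1) by simp
    show "integrable M (\<lambda>_. 1::real)" by simp
    show "AE x in M. (\<lambda>N. indicator (A N) x :: real) \<longlonglongrightarrow> indicator B x"
    proof (rule AE_I2)
      fix x assume "x \<in> space M"
      from assms(3)[OF this] have "eventually (\<lambda>N. indicator (A N) x = (indicator B x :: real)) sequentially"
        by (rule eventually_mono) (simp add: indicator_def)
      then show "(\<lambda>N. indicator (A N) x :: real) \<longlonglongrightarrow> indicator B x" by (rule tendsto_eventually)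
    qed
    show "\<And>N. AE x in M. norm (indicator (A N) x :: real) \<le> 1"
      by (intro AE_I2) (auto simp: indicator_def)
  qed
  moreover have "A N \<inter> space M = A N" for N using sets.sets_into_space[OF assms(1)] by auto
  moreover have "B \<inter> space M = B" using sets.sets_into_space[OF assms(2)] by auto
  ultimately show ?thesis by simp
qed

lemma main_pos:
  assumes m: "1 \<le> m"
  shows "measure M {w \<in> space M.
             (\<forall>i. lamps \<one>\<^bsub>G\<^esub> (\<lambda>j. S j w) (\<lambda>j. U j w) (\<lambda>j. V j w) m i = \<one>\<^bsub>G\<^esub>) \<and>
             rho (\<lambda>j. S j w) k = m \<and> (\<forall>j\<le>m. S j w = xs j)}
       = real (card (carrier G)) powi (- (Max (xs ` {0..m}) - Min (xs ` {0..m}) + 1))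
         * measure M {w \<in> space M. rho (\<lambda>j. S j w) k = m \<and> (\<forall>j\<le>m. S j w = xs j)}"
proof -
  define c where "c = real (card (carrier G)) powi (- (Max (xs ` {0..m}) - Min (xs ` {0..m}) + 1))"
  define XN where "XN N = {w \<in> space M. (\<forall>i. lamps \<one>\<^bsub>G\<^esub> (\<lambda>j. S j w) (\<lambda>j. U j w) (\<lambda>j. V j w) m i = \<one>\<^bsub>G\<^esub>) \<and>
             rho (\<lambda>j. if j \<le> N then S j w else 1) k = m \<and> (\<forall>j\<le>m. S j w = xs j)}" for N
  define YN where "YN N = {w \<in> space M. rho (\<lambda>j. if j \<le> N then S j w else 1) k = m \<and> (\<forall>j\<le>m. S j w = xs j)}" for N
  define X where "X = {w \<in> space M. (\<forall>i. lamps \<one>\<^bsub>G\<^esub> (\<lambda>j. S j w) (\<lambda>j. U j w) (\<lambda>j. V j w) m i = \<one>\<^bsub>G\<^esub>) \<and>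
             rho (\<lambda>j. S j w) k = m \<and> (\<forall>j\<le>m. S j w = xs j)}"
  define Y where "Y = {w \<in> space M. rho (\<lambda>j. S j w) k = m \<and> (\<forall>j\<le>m. S j w = xs j)}"
  have XNs: "XN N \<in> sets M" for N unfolding XN_def by measurable
  have YNs: "YN N \<in> sets M" for N unfolding YN_def by measurable
  have Xs: "X \<in> sets M" unfolding X_def by measurable
  have Ys: "Y \<in> sets M" unfolding Y_def by measurable
  have eqN: "measure M (XN N) = c * measure M (YN N)" if mN: "m \<le> N" for N
  proof -
    have trS: "tr N (rS S {..N} w) = (\<lambda>j. if j \<le> N then S j w else 1)" for w
      by (auto simp: tr_def rS_def fun_eq_iff)
    have rSm: "rS S {..N} w j = S j w" if "j \<le> N" for w j using that by (simp add: rS_def)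
    have lam: "lamps \<one>\<^bsub>G\<^esub> (rS S {..N} w) (rS U {1..N} w) (rS V {1..N} w) m
        = lamps \<one>\<^bsub>G\<^esub> (\<lambda>j. S j w) (\<lambda>j. U j w) (\<lambda>j. V j w) m" for w
      by (rule lamps_cong) (use mN in \<open>auto simp: rS_def\<close>)
    have pre: "(\<forall>j\<le>m. rS S {..N} w j = xs j) \<longleftrightarrow> (\<forall>j\<le>m. S j w = xs j)" for w
      using mN by (auto simp: rSm)
    have e1: "XN N = {w\<in>space M. (\<forall>i. lamps \<one>\<^bsub>G\<^esub> (rS S {..N} w) (rS U {1..N} w) (rS V {1..N} w) m i = \<one>\<^bsub>G\<^esub>)
              \<and> rho (tr N (rS S {..N} w)) k = m \<and> (\<forall>j\<le>m. rS S {..N} w j = xs j)}"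
      unfolding XN_def lam trS pre ..
    have e2: "YN N = {w\<in>space M. rho (tr N (rS S {..N} w)) k = m \<and> (\<forall>j\<le>m. rS S {..N} w j = xs j)}"
      unfolding YN_def trS pre ..
    show ?thesis unfolding e1 e2 c_def
      by (rule key_N[where Q="\<lambda>ys. rho (tr N ys) k = m", OF m mN]) (simp_all only: e1[symmetric] e2[symmetric] XNs YNs)
  qed
  have ev: "eventually (\<lambda>N. rho (\<lambda>j. if j \<le> N then S j w else 1) k = rho (\<lambda>j. S j w) k) sequentially" for w
    using rho_tr_eventually[of "\<lambda>j. S j w" k] by (simp add: tr_def[abs_def])
  have cX: "(\<lambda>N. measure M (XN N)) \<longlonglongrightarrow> measure M X"
    by (rule meas_conv[OF XNs Xs]) (rule eventually_mono[OF ev], auto simp: XN_def X_def)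
  have cY: "(\<lambda>N. measure M (YN N)) \<longlonglongrightarrow> measure M Y"
    by (rule meas_conv[OF YNs Ys]) (rule eventually_mono[OF ev], auto simp: YN_def Y_def)
  have "(\<lambda>N. c * measure M (YN N)) \<longlonglongrightarrow> c * measure M Y" by (rule tendsto_mult_left[OF cY])
  moreover have "eventually (\<lambda>N. c * measure M (YN N) = measure M (XN N)) sequentially"
    using eventually_ge_at_top[of m] by (rule eventually_mono) (simp add: eqN)
  ultimately have "(\<lambda>N. measure M (XN N)) \<longlonglongrightarrow> c * measure M Y" by (rule Lim_transform_eventually)
  with cX have "measure M X = c * measure M Y" by (rule LIMSEQ_unique)
  then show ?thesis unfolding X_def Y_def c_def .
qed

lemma main_all:
  assumes k: "k \<ge> 1"
  shows "measure M {w \<in> space M.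
             (\<forall>i. lamps \<one>\<^bsub>G\<^esub> (\<lambda>j. S j w) (\<lambda>j. U j w) (\<lambda>j. V j w) m i = \<one>\<^bsub>G\<^esub>) \<and>
             rho (\<lambda>j. S j w) k = m \<and> (\<forall>j\<le>m. S j w = xs j)}
       = real (card (carrier G)) powi (- (Max (xs ` {0..m}) - Min (xs ` {0..m}) + 1))
         * measure M {w \<in> space M. rho (\<lambda>j. S j w) k = m \<and> (\<forall>j\<le>m. S j w = xs j)}"
proof (cases "m = 0")
  case False then show ?thesis using main_pos by simp
next
  case True
  interpret P: prob_space M by (rule PS)
  obtain k' where k': "k = Suc k'" using k by (cases k) auto
  define Z where "Z = (\<Union>r. {w\<in>space M. \<forall>n>r. S n w \<noteq> 0})"
  have Zn: "Z \<in> null_sets M" unfolding Z_def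
  proof (intro null_sets_UN)
    fix r
    have s: "{w\<in>space M. \<forall>n>r. S n w \<noteq> 0} \<in> sets M" by measurable
    then show "{w\<in>space M. \<forall>n>r. S n w \<noteq> 0} \<in> null_sets M"
      using recurrence[of r] by (simp add: P.emeasure_eq_measure null_setsI)
  qed
  define X where "X = {w \<in> space M. (\<forall>i. lamps \<one>\<^bsub>G\<^esub> (\<lambda>j. S j w) (\<lambda>j. U j w) (\<lambda>j. V j w) m i = \<one>\<^bsub>G\<^esub>) \<and>
             rho (\<lambda>j. S j w) k = m \<and> (\<forall>j\<le>m. S j w = xs j)}"
  define Y where "Y = {w \<in> space M. rho (\<lambda>j. S j w) k = m \<and> (\<forall>j\<le>m. S j w = xs j)}"
  have Xs: "X \<in> sets M" unfolding X_def by measurable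
  have Ys: "Y \<in> sets M" unfolding Y_def by measurable
  have XZ: "X \<subseteq> Z"
  proof
    fix w assume "w \<in> X"
    then have w: "w \<in> space M" "rho (\<lambda>j. S j w) (Suc k') = 0" unfolding X_def using True k' by auto
    then obtain r where "\<forall>n>r. S n w \<noteq> 0" using rho_zero_finite by blast
    then show "w \<in> Z" unfolding Z_def using w by auto
  qed
  have YZ: "Y \<subseteq> Z"
  proof
    fix w assume "w \<in> Y"
    then have w: "w \<in> space M" "rho (\<lambda>j. S j w) (Suc k') = 0" unfolding Y_def using True k' by auto
    then obtain r where "\<forall>n>r. S n w \<noteq> 0" using rho_zero_finite by blast
    then show "w \<in> Z" unfolding Z_def using w by auto
  qed
  have "measure M X = 0" by (rule measure_eq_0_null_sets[OF null_sets_subset[OF Zn Xs XZ]])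
  moreover have "measure M Y = 0" by (rule measure_eq_0_null_sets[OF null_sets_subset[OF Zn Ys YZ]])
  ultimately show ?thesis unfolding X_def Y_def by simp
qed

end

theorem proposition2p2:
  fixes G :: "('f, 'c) monoid_scheme"
    and M :: "'w measure"
    and p :: real
    and S :: "nat \<Rightarrow> 'w \<Rightarrow> int"
    and U V :: "nat \<Rightarrow> 'w \<Rightarrow> 'f"
  assumes "group G" and "finite (carrier G)" and "card (carrier G) > 1"
    and "1/2 < p" and "p < 1"
    and "prob_space M"
    and "\<And>n. S n \<in> measurable M (count_space UNIV)"
    and "\<And>n. U n \<in> measurable M (count_space UNIV)"
    and "\<And>n. V n \<in> measurable M (count_space UNIV)"
    and law: "\<And>n xs us vs. (\<forall>j. us j \<in> carrier G \<and> vs j \<in> carrier G) \<Longrightarrow>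
         measure M {w \<in> space M. (\<forall>j\<le>n. S j w = xs j) \<and>
                                  (\<forall>j\<in>{1..n}. U j w = us j \<and> V j w = vs j)}
         = path_prob p xs n / real (card (carrier G)) ^ (2 * n)"
    and "k \<ge> 1"
  shows "measure M {w \<in> space M.
             (\<forall>i. lamps \<one>\<^bsub>G\<^esub> (\<lambda>j. S j w) (\<lambda>j. U j w) (\<lambda>j. V j w) m i = \<one>\<^bsub>G\<^esub>) \<and>
             rho (\<lambda>j. S j w) k = m \<and> (\<forall>j\<le>m. S j w = xs j)}
       = real (card (carrier G)) powi (- (Max (xs ` {0..m}) - Min (xs ` {0..m}) + 1))
         * measure M {w \<in> space M. rho (\<lambda>j. S j w) k = m \<and> (\<forall>j\<le>m. S j w = xs j)}"
  by (rule main_all[OF assms(1) assms(2) assms(4) assms(5) assms(6) assms(7) assms(8) assms(9) law assms(11)])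

end
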